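(* Let $(H,m,u,\Delta,\varepsilon,\omega,s,\alpha,\beta)$ be a dual quasi-Hopf algebra over a field $\Bbbk$. Then $S:=\beta\ast s\ast\alpha$, i.e. $S(h)=\beta(h_1)s(h_2)\alpha(h_3)$, is a preantipode for $H$.
   Context: A dual quasi-bialgebra is a datum $(H,m,u,\Delta,\varepsilon,\omega)$ where $(H,\Delta,\varepsilon)$ is a coassociative counital coalgebra over $\Bbbk$; $m:H\otimes H\to H$, $hk:=m(h\otimes k)$, and $u:\Bbbk\to H$, $1_H:=u(1)$, are coalgebra maps with $1_Hh=h=h1_H$; and $\omega:H\otimes H\otimes H\to\Bbbk$ is convolution invertible with inverse $\omega^{-1}$, satisfies $\omega(h\otimes k\otimes l)=\varepsilon(h)\varepsilon(k)\varepsilon(l)$ whenever $1_H\in\{h,k,l\}$, the 3-cocycle condition $\omega(h_1\otimes k_1\otimes l_1m_1)\omega(h_2k_2\otimes l_2\otimes m_2)=\omega(k_1\otimes l_1\otimes m_1)\omega(h_1\otimes k_2l_2\otimes m_2)\omega(h_2\otimes k_3\otimes l_3)$, and quasi-associativity $h_1(k_1l_1)\omega(h_2\otimes k_2\otimes l_2)=\omega(h_1\otimes k_1\otimes l_1)(h_2k_2)l_2$ (Sweedler notation $\Delta(h)=h_1\otimes h_2$). A dual quasi-Hopf algebra $(H,m,u,\Delta,\varepsilon,\omega,s,\alpha,\beta)$ is a dual quasi-bialgebra with a coalgebra anti-morphism $s:H\to H$ and $\alpha,\beta\in H^*$ such that for all $h\in H$: $h_1\beta(h_2)s(h_3)=\beta(h)1_H$;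 $s(h_1)\alpha(h_2)h_3=\alpha(h)1_H$; $\omega(h_1\otimes\beta(h_2)s(h_3)\alpha(h_4)\otimes h_5)=\varepsilon(h)=\omega^{-1}(s(h_1)\otimes\alpha(h_2)h_3\beta(h_4)\otimes s(h_5))$. A preantipode for a dual quasi-bialgebra $H$ is a $\Bbbk$-linear map $S:H\to H$ such that for all $x\in H$: $S(x_2)_1\otimes x_1S(x_2)_2=S(x)\otimes 1_H$; $\omega(x_1\otimes S(x_2)\otimes x_3)=\varepsilon(x)$; $S(x_1)_1x_2\otimes S(x_1)_2=1_H\otimes S(x)$. *)

theory Defs
  imports Main "HOL.Vector_Spaces"
begin

text \<open>
An element of the n-fold tensor power of H is represented by a finite list of
n-tuples (as lists of length n), standing for the sum of the corresponding simple
tensors.  Two such representatives denote the same tensor iff they agree under every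
functional f_1 (x) ... (x) f_n with linear f_i (over a field, H^* (x) ... (x) H^*
separates the points of H (x) ... (x) H).

Delta is given by cop :: 'h => ('h * 'h) list, a chosen
representative of Delta(h) = sum h_1 (x) h_2.  The iterated Sweedler representative
sw cop n h is a list of (n+1)-tuples (h_1,...,h_{n+1}), obtained by applying Delta
repeatedly to the last tensor factor.  Sweedler sums of multilinear expressions are
computed as sums over these lists.
\<close>

definition tens_eq ::
  "('k::field \<Rightarrow> 'h::ab_group_add \<Rightarrow> 'h) \<Rightarrow> nat \<Rightarrow> 'h list list \<Rightarrow> 'h list list \<Rightarrow> bool" where
  "tens_eq sc n L M \<longleftrightarrow>
     (\<forall>fs. length fs = n \<longrightarrow> (\<forall>f\<in>set fs. Vector_Spaces.linear sc (*) f) \<longrightarrow>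
        (\<Sum>t\<leftarrow>L. prod_list (map2 (\<lambda>f x. f x) fs t)) =
        (\<Sum>t\<leftarrow>M. prod_list (map2 (\<lambda>f x. f x) fs t)))"

fun sw :: "('h \<Rightarrow> ('h \<times> 'h) list) \<Rightarrow> nat \<Rightarrow> 'h \<Rightarrow> 'h list list" where
  "sw cop 0 h = [[h]]"
| "sw cop (Suc n) h = concat (map (\<lambda>(a, b). map (\<lambda>t. a # t) (sw cop n b)) (cop h))"

definition bilinear_map ::
  "('k::field \<Rightarrow> 'h::ab_group_add \<Rightarrow> 'h) \<Rightarrow> ('h \<Rightarrow> 'h \<Rightarrow> 'h) \<Rightarrow> bool" where
  "bilinear_map sc m \<longleftrightarrow>
     (\<forall>x. Vector_Spaces.linear sc sc (m x)) \<and> (\<forall>y. Vector_Spaces.linear sc sc (\<lambda>x. m x y))"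

definition trilinear_form ::
  "('k::field \<Rightarrow> 'h::ab_group_add \<Rightarrow> 'h) \<Rightarrow> ('h \<Rightarrow> 'h \<Rightarrow> 'h \<Rightarrow> 'k) \<Rightarrow> bool" where
  "trilinear_form sc w \<longleftrightarrow>
     (\<forall>y z. Vector_Spaces.linear sc (*) (\<lambda>x. w x y z)) \<and>
     (\<forall>x z. Vector_Spaces.linear sc (*) (\<lambda>y. w x y z)) \<and>
     (\<forall>x y. Vector_Spaces.linear sc (*) (\<lambda>z. w x y z))"

definition coalgebra ::
  "('k::field \<Rightarrow> 'h::ab_group_add \<Rightarrow> 'h) \<Rightarrow> ('h \<Rightarrow> ('h \<times> 'h) list) \<Rightarrow> ('h \<Rightarrow> 'k) \<Rightarrow> bool" where
  "coalgebra sc cop eps \<longleftrightarrow>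
     vector_space sc \<and>
     Vector_Spaces.linear sc (*) eps \<and>
     (\<forall>a x y. tens_eq sc 2 (sw cop 1 (sc a x + y))
                 (map (\<lambda>t. [sc a (t!0), t!1]) (sw cop 1 x) @ sw cop 1 y)) \<and>
     (\<forall>h. tens_eq sc 3
            (concat (map (\<lambda>(a, b). map (\<lambda>(c, d). [c, d, b]) (cop a)) (cop h)))
            (sw cop 2 h)) \<and>
     (\<forall>h. (\<Sum>t\<leftarrow>sw cop 1 h. sc (eps (t!0)) (t!1)) = h) \<and>
     (\<forall>h. (\<Sum>t\<leftarrow>sw cop 1 h. sc (eps (t!1)) (t!0)) = h)"

definition dual_quasi_bialgebra ::
  "('k::field \<Rightarrow> 'h::ab_group_add \<Rightarrow> 'h) \<Rightarrow> ('h \<Rightarrow> 'h \<Rightarrow> 'h) \<Rightarrow> 'h \<Rightarrow>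
   ('h \<Rightarrow> ('h \<times> 'h) list) \<Rightarrow> ('h \<Rightarrow> 'k) \<Rightarrow>
   ('h \<Rightarrow> 'h \<Rightarrow> 'h \<Rightarrow> 'k) \<Rightarrow> ('h \<Rightarrow> 'h \<Rightarrow> 'h \<Rightarrow> 'k) \<Rightarrow> bool" where
  "dual_quasi_bialgebra sc m one cop eps w wi \<longleftrightarrow>
     coalgebra sc cop eps \<and>
     \<comment> \<open>m is linear on H (x) H and a coalgebra map\<close>
     bilinear_map sc m \<and>
     (\<forall>h k. tens_eq sc 2 (sw cop 1 (m h k))
              (concat (map (\<lambda>s. map (\<lambda>t. [m (s!0) (t!0), m (s!1) (t!1)]) (sw cop 1 k))
                        (sw cop 1 h)))) \<and>
     (\<forall>h k. eps (m h k) = eps h * eps k) \<and>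
     \<comment> \<open>u : k -> H, u(c) = c 1_H, is a coalgebra map, and 1_H is a two-sided unit\<close>
     tens_eq sc 2 (sw cop 1 one) [[one, one]] \<and>
     eps one = 1 \<and>
     (\<forall>h. m one h = h \<and> m h one = h) \<and>
     \<comment> \<open>omega is a linear form on H (x) H (x) H, with convolution inverse wi\<close>
     trilinear_form sc w \<and> trilinear_form sc wi \<and>
     (\<forall>h k l. (\<Sum>a\<leftarrow>sw cop 1 h. \<Sum>b\<leftarrow>sw cop 1 k. \<Sum>c\<leftarrow>sw cop 1 l.
                  w (a!0) (b!0) (c!0) * wi (a!1) (b!1) (c!1)) = eps h * eps k * eps l) \<and>
     (\<forall>h k l. (\<Sum>a\<leftarrow>sw cop 1 h. \<Sum>b\<leftarrow>sw cop 1 k. \<Sum>c\<leftarrow>sw cop 1 l.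
                  wi (a!0) (b!0) (c!0) * w (a!1) (b!1) (c!1)) = eps h * eps k * eps l) \<and>
     \<comment> \<open>normalization\<close>
     (\<forall>h k l. (h = one \<or> k = one \<or> l = one) \<longrightarrow> w h k l = eps h * eps k * eps l) \<and>
     \<comment> \<open>3-cocycle condition\<close>
     (\<forall>h k l n.
        (\<Sum>a\<leftarrow>sw cop 1 h. \<Sum>b\<leftarrow>sw cop 1 k. \<Sum>c\<leftarrow>sw cop 1 l. \<Sum>d\<leftarrow>sw cop 1 n.
            w (a!0) (b!0) (m (c!0) (d!0)) * w (m (a!1) (b!1)) (c!1) (d!1)) =
        (\<Sum>a\<leftarrow>sw cop 1 h. \<Sum>b\<leftarrow>sw cop 2 k. \<Sum>c\<leftarrow>sw cop 2 l. \<Sum>d\<leftarrow>sw cop 1 n.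
            w (b!0) (c!0) (d!0) * w (a!0) (m (b!1) (c!1)) (d!1) * w (a!1) (b!2) (c!2))) \<and>
     \<comment> \<open>quasi-associativity\<close>
     (\<forall>h k l.
        (\<Sum>a\<leftarrow>sw cop 1 h. \<Sum>b\<leftarrow>sw cop 1 k. \<Sum>c\<leftarrow>sw cop 1 l.
            sc (w (a!1) (b!1) (c!1)) (m (a!0) (m (b!0) (c!0)))) =
        (\<Sum>a\<leftarrow>sw cop 1 h. \<Sum>b\<leftarrow>sw cop 1 k. \<Sum>c\<leftarrow>sw cop 1 l.
            sc (w (a!0) (b!0) (c!0)) (m (m (a!1) (b!1)) (c!1))))"

definition dual_quasi_hopf ::
  "('k::field \<Rightarrow> 'h::ab_group_add \<Rightarrow> 'h) \<Rightarrow> ('h \<Rightarrow> 'h \<Rightarrow> 'h) \<Rightarrow> 'h \<Rightarrow>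
   ('h \<Rightarrow> ('h \<times> 'h) list) \<Rightarrow> ('h \<Rightarrow> 'k) \<Rightarrow>
   ('h \<Rightarrow> 'h \<Rightarrow> 'h \<Rightarrow> 'k) \<Rightarrow> ('h \<Rightarrow> 'h \<Rightarrow> 'h \<Rightarrow> 'k) \<Rightarrow>
   ('h \<Rightarrow> 'h) \<Rightarrow> ('h \<Rightarrow> 'k) \<Rightarrow> ('h \<Rightarrow> 'k) \<Rightarrow> bool" where
  "dual_quasi_hopf sc m one cop eps w wi s \<alpha> \<beta> \<longleftrightarrow>
     dual_quasi_bialgebra sc m one cop eps w wi \<and>
     \<comment> \<open>s is a coalgebra anti-morphism\<close>
     Vector_Spaces.linear sc sc s \<and>
     (\<forall>h. tens_eq sc 2 (sw cop 1 (s h)) (map (\<lambda>t. [s (t!1), s (t!0)]) (sw cop 1 h))) \<and>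
     (\<forall>h. eps (s h) = eps h) \<and>
     Vector_Spaces.linear sc (*) \<alpha> \<and> Vector_Spaces.linear sc (*) \<beta> \<and>
     (\<forall>h. (\<Sum>t\<leftarrow>sw cop 2 h. sc (\<beta> (t!1)) (m (t!0) (s (t!2)))) = sc (\<beta> h) one) \<and>
     (\<forall>h. (\<Sum>t\<leftarrow>sw cop 2 h. sc (\<alpha> (t!1)) (m (s (t!0)) (t!2))) = sc (\<alpha> h) one) \<and>
     (\<forall>h. (\<Sum>t\<leftarrow>sw cop 4 h. w (t!0) (sc (\<beta> (t!1) * \<alpha> (t!3)) (s (t!2))) (t!4)) = eps h) \<and>
     (\<forall>h. (\<Sum>t\<leftarrow>sw cop 4 h. wi (s (t!0)) (sc (\<alpha> (t!1) * \<beta> (t!3)) (t!2)) (s (t!4))) = eps h)"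

definition preantipode ::
  "('k::field \<Rightarrow> 'h::ab_group_add \<Rightarrow> 'h) \<Rightarrow> ('h \<Rightarrow> 'h \<Rightarrow> 'h) \<Rightarrow> 'h \<Rightarrow>
   ('h \<Rightarrow> ('h \<times> 'h) list) \<Rightarrow> ('h \<Rightarrow> 'k) \<Rightarrow>
   ('h \<Rightarrow> 'h \<Rightarrow> 'h \<Rightarrow> 'k) \<Rightarrow> ('h \<Rightarrow> 'h) \<Rightarrow> bool" where
  "preantipode sc m one cop eps w S \<longleftrightarrow>
     Vector_Spaces.linear sc sc S \<and>
     (\<forall>x. tens_eq sc 2
            (concat (map (\<lambda>t. map (\<lambda>u. [u!0, m (t!0) (u!1)]) (sw cop 1 (S (t!1)))) (sw cop 1 x)))
            [[S x, one]]) \<and>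
     (\<forall>x. (\<Sum>t\<leftarrow>sw cop 2 x. w (t!0) (S (t!1)) (t!2)) = eps x) \<and>
     (\<forall>x. tens_eq sc 2
            (concat (map (\<lambda>t. map (\<lambda>u. [m (u!0) (t!1), u!1]) (sw cop 1 (S (t!0)))) (sw cop 1 x)))
            [[one, S x]])"

end

theory Submission
  imports Defs
begin


lemma vs_field: "vector_space ((*) :: 'k::field \<Rightarrow> 'k \<Rightarrow> 'k)"
  by unfold_locales (auto simp: algebra_simps)

context fixes sc :: "'k::field \<Rightarrow> 'h::ab_group_add \<Rightarrow> 'h"
  assumes VS: "vector_space sc"
begin

lemma sc_simps: "sc a (x + y) = sc a x + sc a y" "sc (a + b) x = sc a x + sc b x"
  "sc a (sc b x) = sc (a * b) x" "sc 1 x = x"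
  using VS by (auto simp: vector_space_def)

lemma sc_zero[simp]: "sc 0 x = 0" "sc a 0 = 0"
proof -
  have "sc 0 x = sc 0 x + sc 0 x" using sc_simps(2)[of 0 0 x] by simp
  then show "sc 0 x = 0" by simp
  have "sc a 0 = sc a 0 + sc a 0" using sc_simps(1)[of a 0 0] by simp
  then show "sc a 0 = 0" by simp
qed

lemma linD:
  assumes "Vector_Spaces.linear sc (*) f"
  shows "f (x + y) = f x + f y" "f (sc c x) = c * f x"
  using assms by (auto simp: linear_iff)

lemma lin0: assumes "Vector_Spaces.linear sc (*) f" shows "f 0 = 0"
proof -
  have "f 0 + f 0 = f 0 + 0" using linD(1)[OF assms, of 0 0] by simp
  then show ?thesis by (rule add_left_imp_eq)
qed

lemma linI:
  assumes "\<And>x y. f (x + y) = f x + f y" "\<And>c x. f (sc c x) = c * f x"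
  shows "Vector_Spaces.linear sc (*) f"
  unfolding linear_iff using assms VS vs_field by blast

lemma linI2:
  assumes h: "\<And>c x y. f (sc c x + y) = c * f x + f y"
  shows "Vector_Spaces.linear sc (*) f"
proof -
  have "f 0 + f 0 = f 0 + 0" using h[of 1 0 0] by (simp add: sc_simps)
  then have z: "f 0 = 0" by (rule add_left_imp_eq)
  show ?thesis
  proof (rule linI)
    fix x y show "f (x + y) = f x + f y" using h[of 1 x y] by (simp add: sc_simps)
  next
    fix c x show "f (sc c x) = c * f x" using h[of c x 0] z by simp
  qed
qed

lemma lin_sum_list:
  assumes "Vector_Spaces.linear sc (*) f"
  shows "f (\<Sum>u\<leftarrow>U. g u) = (\<Sum>u\<leftarrow>U. f (g u))"
  by (induction U) (auto simp: lin0[OF assms] linD[OF assms])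

lemma lin_sum:
  assumes "Vector_Spaces.linear sc (*) f"
  shows "f (sum g A) = (\<Sum>a\<in>A. f (g a))"
  by (induction A rule: infinite_finite_induct) (auto simp: lin0[OF assms] linD[OF assms])

lemma lin_const0: "Vector_Spaces.linear sc (*) (\<lambda>x. 0)"
  by (rule linI) auto

lemma lin_sum_list_fun:
  assumes "\<And>u. u \<in> set U \<Longrightarrow> Vector_Spaces.linear sc (*) (F u)"
  shows "Vector_Spaces.linear sc (*) (\<lambda>x. \<Sum>u\<leftarrow>U. F u x)"
  using assms
proof (induction U)
  case Nil then show ?case by (simp add: lin_const0)
next
  case (Cons a U)
  have l1: "Vector_Spaces.linear sc (*) (F a)" using Cons by simp
  have l2: "Vector_Spaces.linear sc (*) (\<lambda>x. \<Sum>u\<leftarrow>U. F u x)" using Cons by simp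
  show ?case
  proof (rule linI)
    fix x y show "(\<Sum>u\<leftarrow>a # U. F u (x + y)) = (\<Sum>u\<leftarrow>a # U. F u x) + (\<Sum>u\<leftarrow>a # U. F u y)"
      using linD(1)[OF l1, of x y] linD(1)[OF l2, of x y] by (simp add: add_ac)
  next
    fix c x show "(\<Sum>u\<leftarrow>a # U. F u (sc c x)) = c * (\<Sum>u\<leftarrow>a # U. F u x)"
      using linD(2)[OF l1, of c x] linD(2)[OF l2, of c x] by (simp add: distrib_left)
  qed
qed

lemma lin_cmul:
  assumes "Vector_Spaces.linear sc (*) f"
  shows "Vector_Spaces.linear sc (*) (\<lambda>x. c * f x)" "Vector_Spaces.linear sc (*) (\<lambda>x. f x * c)"
proof -
  show "Vector_Spaces.linear sc (*) (\<lambda>x. c * f x)"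
    by (rule linI) (simp_all add: linD[OF assms] distrib_left mult.left_commute)
  show "Vector_Spaces.linear sc (*) (\<lambda>x. f x * c)"
    by (rule linI) (simp_all add: linD[OF assms] distrib_right mult.assoc)
qed

lemma lin_comp:
  assumes "Vector_Spaces.linear sc sc g" "Vector_Spaces.linear sc (*) f"
  shows "Vector_Spaces.linear sc (*) (\<lambda>x. f (g x))"
proof -
  have g1: "g (x + y) = g x + g y" "g (sc c x) = sc c (g x)" for x y c
    using assms(1) by (auto simp: linear_iff)
  show ?thesis by (rule linI) (simp_all add: g1 linD[OF assms(2)])
qed

end

definition multilin :: "('k::field \<Rightarrow> 'h::ab_group_add \<Rightarrow> 'h) \<Rightarrow> nat \<Rightarrow> ('h list \<Rightarrow> 'k) \<Rightarrow> bool" where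
  "multilin sc n G \<longleftrightarrow> (\<forall>p q. length p + length q + 1 = n \<longrightarrow>
       Vector_Spaces.linear sc (*) (\<lambda>x. G (p @ x # q)))"

lemma sl_cong: "(\<And>t. t \<in> set L \<Longrightarrow> f t = g t) \<Longrightarrow> sum_list (map f L) = sum_list (map g L)"
  by (metis map_cong)

lemma sl_swap: "(\<Sum>t\<leftarrow>L. \<Sum>b\<in>B. f t b) = (\<Sum>b\<in>B. \<Sum>t\<leftarrow>L. f t b)"
  by (induction L) (simp_all add: sum.distrib)

context fixes sc :: "'k::field \<Rightarrow> 'h::ab_group_add \<Rightarrow> 'h"
  assumes VS: "vector_space sc"
begin

lemma tens_eq_multilin:
  assumes te: "tens_eq sc n L M" and lL: "\<forall>t\<in>set L. length t = n" and lM: "\<forall>t\<in>set M. length t = n"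
    and F: "multilin sc n F"
  shows "(\<Sum>t\<leftarrow>L. F t) = (\<Sum>t\<leftarrow>M. F t)"
proof -
  interpret V: vector_space sc by (rule VS)
  interpret P: vector_space_pair sc "(*)" using VS vs_field by (simp add: vector_space_pair_def)
  define Vs where "Vs = \<Union>(set ` (set L \<union> set M))"
  have fV: "finite Vs" unfolding Vs_def by simp
  obtain B where BV: "B \<subseteq> Vs" and iB: "V.independent B" and VB: "Vs \<subseteq> V.span B"
    using V.maximal_independent_subset[of Vs] by blast
  have fB: "finite B" using BV fV finite_subset by blast
  define c where "c b = P.construct B (\<lambda>b'. if b' = b then 1 else 0)" for b
  have lc: "Vector_Spaces.linear sc (*) (c b)" for b
    unfolding c_def by (rule P.linear_construct[OF iB])
  have cb: "b' \<in> B \<Longrightarrow> c b b' = (if b' = b then 1 else 0)" for b b'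
    unfolding c_def by (rule P.construct_basis[OF iB])
  have repr: "x = (\<Sum>b\<in>B. sc (c b x) b)" if xs: "x \<in> V.span B" for x
  proof -
    obtain u where u: "x = (\<Sum>v\<in>B. sc (u v) v)"
      using xs V.span_finite[OF fB] by auto
    have "c b x = u b" if "b \<in> B" for b
    proof -
      have "c b x = (\<Sum>v\<in>B. c b (sc (u v) v))" unfolding u by (rule lin_sum[OF VS lc])
      also have "\<dots> = (\<Sum>v\<in>B. u v * (if v = b then 1 else 0))"
        by (rule sum.cong) (auto simp: linD[OF VS lc] cb)
      also have "\<dots> = u b" using that fB by (simp add: if_distrib cong: if_cong)
      finally show ?thesis .
    qed
    then show ?thesis by (simp add: u)
  qed
  define pf where "pf fs t = prod_list (map2 (\<lambda>f x. f x) fs t)" for fs :: "('h \<Rightarrow> 'k) list" and t :: "'h list"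
  have main: "\<forall>G fs. multilin sc k G \<longrightarrow> length fs = n - k \<longrightarrow> (\<forall>f\<in>set fs. Vector_Spaces.linear sc (*) f) \<longrightarrow>
      (\<Sum>t\<leftarrow>L. G (take k t) * pf fs (drop k t)) = (\<Sum>t\<leftarrow>M. G (take k t) * pf fs (drop k t))"
    if "k \<le> n" for k
    using that
  proof (induction k)
    case 0
    show ?case
    proof (intro allI impI)
      fix G :: "'h list \<Rightarrow> 'k" and fs :: "('h \<Rightarrow> 'k) list"
      assume "length fs = n - 0" "\<forall>f\<in>set fs. Vector_Spaces.linear sc (*) f"
      then have "(\<Sum>t\<leftarrow>L. pf fs t) = (\<Sum>t\<leftarrow>M. pf fs t)"
        using te unfolding tens_eq_def pf_def by auto
      then show "(\<Sum>t\<leftarrow>L. G (take 0 t) * pf fs (drop 0 t)) = (\<Sum>t\<leftarrow>M. G (take 0 t) * pf fs (drop 0 t))"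
        by (simp add: sum_list_const_mult)
    qed
  next
    case (Suc k)
    show ?case
    proof (intro allI impI)
      fix G :: "'h list \<Rightarrow> 'k" and fs :: "('h \<Rightarrow> 'k) list"
      assume G: "multilin sc (Suc k) G" and lfs: "length fs = n - Suc k"
        and lf: "\<forall>f\<in>set fs. Vector_Spaces.linear sc (*) f"
      have exp: "G (take (Suc k) t) * pf fs (drop (Suc k) t) =
          (\<Sum>b\<in>B. G (take k t @ [b]) * pf (c b # fs) (drop k t))"
        if "t \<in> set L \<union> set M" for t
      proof -
        have lt: "length t = n" using that lL lM by auto
        have kt: "k < length t" using lt Suc.prems by simp
        have "t ! k \<in> set t" using kt by simp
        then have tk: "t ! k \<in> V.span B" using VB that unfolding Vs_def by blast
        have lG: "Vector_Spaces.linear sc (*) (\<lambda>x. G (take k t @ x # []))"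
          using G kt unfolding multilin_def by auto
        have "G (take (Suc k) t) = G (take k t @ [t ! k])"
          by (simp add: take_Suc_conv_app_nth kt)
        also have "\<dots> = G (take k t @ [\<Sum>b\<in>B. sc (c b (t!k)) b])"
          using repr[OF tk] by simp
        also have "\<dots> = (\<Sum>b\<in>B. c b (t!k) * G (take k t @ [b]))"
          using lin_sum[OF VS lG, of "\<lambda>b. sc (c b (t!k)) b" B] linD(2)[OF VS lG] by simp
        finally have e1: "G (take (Suc k) t) = (\<Sum>b\<in>B. c b (t!k) * G (take k t @ [b]))" .
        have dk: "drop k t = t ! k # drop (Suc k) t" by (simp add: Cons_nth_drop_Suc kt)
        show ?thesis unfolding e1 sum_distrib_right dk
          by (rule sum.cong) (simp_all add: pf_def)
      qed
      have "(\<Sum>t\<leftarrow>L. G (take (Suc k) t) * pf fs (drop (Suc k) t))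
          = (\<Sum>t\<leftarrow>L. \<Sum>b\<in>B. G (take k t @ [b]) * pf (c b # fs) (drop k t))"
        by (rule sl_cong) (simp add: exp)
      also have "\<dots> = (\<Sum>b\<in>B. \<Sum>t\<leftarrow>L. G (take k t @ [b]) * pf (c b # fs) (drop k t))"
        by (rule sl_swap)
      also have "\<dots> = (\<Sum>b\<in>B. \<Sum>t\<leftarrow>M. G (take k t @ [b]) * pf (c b # fs) (drop k t))"
      proof (rule sum.cong[OF refl])
        fix b
        have Gb: "multilin sc k (\<lambda>p. G (p @ [b]))"
          unfolding multilin_def
        proof (intro allI impI)
          fix p q :: "'h list" assume "length p + length q + 1 = k"
          then have "length p + length (q @ [b]) + 1 = Suc k" by simp
          then have "Vector_Spaces.linear sc (*) (\<lambda>x. G (p @ x # (q @ [b])))"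
            using G unfolding multilin_def by blast
          then show "Vector_Spaces.linear sc (*) (\<lambda>x. G ((p @ x # q) @ [b]))" by simp
        qed
        show "(\<Sum>t\<leftarrow>L. G (take k t @ [b]) * pf (c b # fs) (drop k t)) =
              (\<Sum>t\<leftarrow>M. G (take k t @ [b]) * pf (c b # fs) (drop k t))"
        proof -
          have l1: "length (c b # fs) = n - k" using lfs Suc.prems by simp
          have l2: "\<And>f. f \<in> set (c b # fs) \<Longrightarrow> Vector_Spaces.linear sc (*) f" using lf lc by auto
          show ?thesis using Suc.IH[OF Suc_leD[OF Suc.prems], rule_format, OF Gb l1 l2] .
        qed
      qed
      also have "\<dots> = (\<Sum>t\<leftarrow>M. \<Sum>b\<in>B. G (take k t @ [b]) * pf (c b # fs) (drop k t))"
        by (rule sl_swap[symmetric])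
      also have "\<dots> = (\<Sum>t\<leftarrow>M. G (take (Suc k) t) * pf fs (drop (Suc k) t))"
        by (rule sl_cong) (simp add: exp)
      finally show "(\<Sum>t\<leftarrow>L. G (take (Suc k) t) * pf fs (drop (Suc k) t)) =
          (\<Sum>t\<leftarrow>M. G (take (Suc k) t) * pf fs (drop (Suc k) t))" .
    qed
  qed
  have "(\<Sum>t\<leftarrow>L. F (take n t) * pf [] (drop n t)) = (\<Sum>t\<leftarrow>M. F (take n t) * pf [] (drop n t))"
    using main[of n] F by simp
  moreover have "(\<Sum>t\<leftarrow>L. F (take n t) * pf [] (drop n t)) = (\<Sum>t\<leftarrow>L. F t)"
    by (rule sl_cong) (simp add: pf_def lL)
  moreover have "(\<Sum>t\<leftarrow>M. F (take n t) * pf [] (drop n t)) = (\<Sum>t\<leftarrow>M. F t)"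
    by (rule sl_cong) (simp add: pf_def lM)
  ultimately show ?thesis by simp
qed

end


lemma sl_concat: "(\<Sum>t\<leftarrow>concat xs. f t) = (\<Sum>x\<leftarrow>xs. \<Sum>t\<leftarrow>x. f t)"
  by (induction xs) auto

lemma sl_swap2: "(\<Sum>i\<leftarrow>I. \<Sum>j\<leftarrow>J. f i j) = (\<Sum>j\<leftarrow>J. \<Sum>i\<leftarrow>I. (f i j :: 'a::comm_monoid_add))"
proof (induction I)
  case (Cons a I)
  have "(\<Sum>j\<leftarrow>J. f a j + (\<Sum>i\<leftarrow>I. f i j)) = (\<Sum>j\<leftarrow>J. f a j) + (\<Sum>j\<leftarrow>J. \<Sum>i\<leftarrow>I. f i j)"
    by (rule sum_list_addf)
  then show ?case using Cons by simp
qed simp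

lemma sw_len: "t \<in> set (sw cop n x) \<Longrightarrow> length t = Suc n"
  by (induction n arbitrary: x t) auto

lemma sw_Suc_sum: "(\<Sum>t\<leftarrow>sw cop (Suc n) x. F t) = (\<Sum>(a,b)\<leftarrow>cop x. \<Sum>t\<leftarrow>sw cop n b. F (a # t))"
  by (simp add: sl_concat o_def split_def)

lemma sw1_sum: "(\<Sum>t\<leftarrow>sw cop 1 x. F t) = (\<Sum>(a,b)\<leftarrow>cop x. F [a, b])"
  using sw_Suc_sum[where cop=cop and n=0 and x=x and F=F] by simp

lemma sw0_sum: "(\<Sum>t\<leftarrow>sw cop 0 x. F t) = F [x]" by simp

lemma len2: "length t = 2 \<Longrightarrow> t = [t!0, t!1]"
  by (cases t; cases "tl t"; auto)
lemma len3: "length t = 3 \<Longrightarrow> t = [t!0, t!1, t!2]"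
  by (cases t; cases "tl t"; cases "tl (tl t)"; auto)

context fixes sc :: "'k::field \<Rightarrow> 'h::ab_group_add \<Rightarrow> 'h"
  assumes VS: "vector_space sc"
begin

lemma multilinD:
  assumes "multilin sc n G" "length t = n" "j < n"
  shows "Vector_Spaces.linear sc (*) (\<lambda>x. G (t[j := x]))"
proof -
  have e: "t[j := x] = take j t @ x # drop (Suc j) t" for x
    using assms by (simp add: upd_conv_take_nth_drop)
  have "length (take j t) + length (drop (Suc j) t) + 1 = n" using assms by simp
  then show ?thesis using assms(1) unfolding e multilin_def by blast
qed

lemma multilinI:
  assumes "\<And>j t. j < n \<Longrightarrow> length t = n \<Longrightarrow> Vector_Spaces.linear sc (*) (\<lambda>x. G (t[j := x]))"
  shows "multilin sc n G"
  unfolding multilin_def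
proof (intro allI impI)
  fix p q :: "'h list" assume l: "length p + length q + 1 = n"
  have "length p < n" "length (p @ 0 # q) = n" using l by auto
  then have "Vector_Spaces.linear sc (*) (\<lambda>x. G ((p @ 0 # q)[length p := x]))"
    using assms by blast
  then show "Vector_Spaces.linear sc (*) (\<lambda>x. G (p @ x # q))" by simp
qed

lemma ml_shift: "multilin sc (Suc N) G \<Longrightarrow> multilin sc N (\<lambda>v. G (a # v))"
  unfolding multilin_def
proof (intro allI impI)
  fix p q :: "'h list" assume h: "\<forall>p q. length p + length q + 1 = Suc N \<longrightarrow> Vector_Spaces.linear sc (*) (\<lambda>x. G (p @ x # q))"
    and l: "length p + length q + 1 = N"
  from l have "length (a # p) + length q + 1 = Suc N" by simp
  with h have "Vector_Spaces.linear sc (*) (\<lambda>x. G ((a # p) @ x # q))" by blast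
  then show "Vector_Spaces.linear sc (*) (\<lambda>x. G (a # p @ x # q))" by simp
qed

lemma ml_pos:
  assumes "multilin sc N G" "length p + length q + 1 = N"
  shows "Vector_Spaces.linear sc (*) (\<lambda>x. G (p @ x # q))"
  using assms unfolding multilin_def by blast

end

context fixes sc :: "'k::field \<Rightarrow> 'h::ab_group_add \<Rightarrow> 'h"
  and cop :: "'h \<Rightarrow> ('h \<times> 'h) list" and eps :: "'h \<Rightarrow> 'k"
  assumes C: "coalgebra sc cop eps"
begin

lemma VS: "vector_space sc" using C by (simp add: coalgebra_def)

lemma delta_lin:
  assumes P: "multilin sc 2 P"
  shows "(\<Sum>t\<leftarrow>sw cop 1 (sc c x + y). P t) = c * (\<Sum>t\<leftarrow>sw cop 1 x. P t) + (\<Sum>t\<leftarrow>sw cop 1 y. P t)"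
proof -
  have te: "tens_eq sc 2 (sw cop 1 (sc c x + y)) (map (\<lambda>t. [sc c (t!0), t!1]) (sw cop 1 x) @ sw cop 1 y)"
    using C by (simp add: coalgebra_def)
  have "(\<Sum>t\<leftarrow>sw cop 1 (sc c x + y). P t) = (\<Sum>t\<leftarrow>map (\<lambda>t. [sc c (t!0), t!1]) (sw cop 1 x) @ sw cop 1 y. P t)"
    by (rule tens_eq_multilin[OF VS te _ _ P]) (auto dest: sw_len)
  also have "\<dots> = (\<Sum>t\<leftarrow>sw cop 1 x. P [sc c (t!0), t!1]) + (\<Sum>t\<leftarrow>sw cop 1 y. P t)"
    by (simp add: o_def)
  also have "(\<Sum>t\<leftarrow>sw cop 1 x. P [sc c (t!0), t!1]) = (\<Sum>t\<leftarrow>sw cop 1 x. c * P t)"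
  proof (rule sl_cong)
    fix t assume "t \<in> set (sw cop 1 x)"
    then have "length t = 2" using sw_len by fastforce
    then have t: "t = [t!0, t!1]" by (rule len2)
    define a b where "a = t!0" "b = t!1"
    note t = t[folded a_b_def]
    have "Vector_Spaces.linear sc (*) (\<lambda>z. P ([] @ z # [b]))" by (rule ml_pos[OF VS P]) simp
    then have "P [sc c a, b] = c * P [a, b]" using linD(2)[OF VS, of "\<lambda>z. P ([] @ z # [b])" c a] by simp
    then show "P [sc c (t!0), t!1] = c * P t" using t by simp
  qed
  finally show ?thesis by (simp add: sum_list_const_mult)
qed

lemma coassoc2:
  assumes P: "multilin sc 3 P"
  shows "(\<Sum>(a,b)\<leftarrow>cop h. \<Sum>(c,d)\<leftarrow>cop a. P [c, d, b]) = (\<Sum>t\<leftarrow>sw cop 2 h. P t)"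
proof -
  have te: "tens_eq sc 3 (concat (map (\<lambda>(a, b). map (\<lambda>(c, d). [c, d, b]) (cop a)) (cop h))) (sw cop 2 h)"
    using C by (simp add: coalgebra_def)
  have "(\<Sum>t\<leftarrow>concat (map (\<lambda>(a, b). map (\<lambda>(c, d). [c, d, b]) (cop a)) (cop h)). P t) = (\<Sum>t\<leftarrow>sw cop 2 h. P t)"
    by (rule tens_eq_multilin[OF VS te _ _ P]) (auto dest: sw_len)
  then show ?thesis by (simp add: sl_concat o_def split_def)
qed

lemma sw_sum_linear:
  assumes G: "multilin sc N G" and l: "length p + length q + k + 1 = N"
  shows "Vector_Spaces.linear sc (*) (\<lambda>y. \<Sum>u\<leftarrow>sw cop k y. G (p @ u @ q))"
  using l
proof (induction k arbitrary: p)
  case 0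
  have "Vector_Spaces.linear sc (*) (\<lambda>y. G (p @ y # q))" by (rule ml_pos[OF VS G]) (use 0 in simp)
  then show ?case by simp
next
  case (Suc k)
  define \<Psi> where "\<Psi> t = (\<Sum>u\<leftarrow>sw cop k (t!1). G ((p @ [t!0]) @ u @ q))" for t
  have \<Psi>: "multilin sc 2 \<Psi>"
  proof (rule multilinI[OF VS])
    fix j :: nat and t :: "'h list" assume j: "j < 2" and lt: "length t = 2"
    show "Vector_Spaces.linear sc (*) (\<lambda>x. \<Psi> (t[j := x]))"
    proof (cases "j = 0")
      case True
      have "Vector_Spaces.linear sc (*) (\<lambda>x. \<Sum>u\<leftarrow>sw cop k (t!1). G (p @ x # (u @ q)))"
      proof (rule lin_sum_list_fun[OF VS])
        fix u assume "u \<in> set (sw cop k (t!1))"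
        then have "length u = Suc k" by (rule sw_len)
        then have "length p + length (u @ q) + 1 = N" using Suc.prems by simp
        then show "Vector_Spaces.linear sc (*) (\<lambda>x. G (p @ x # (u @ q)))" by (rule ml_pos[OF VS G])
      qed
      moreover have "\<Psi> (t[j := x]) = (\<Sum>u\<leftarrow>sw cop k (t!1). G (p @ x # (u @ q)))" for x
        using True lt by (simp add: \<Psi>_def)
      ultimately show ?thesis by simp
    next
      case False
      then have j1: "j = 1" using j by simp
      have "Vector_Spaces.linear sc (*) (\<lambda>y. \<Sum>u\<leftarrow>sw cop k y. G ((p @ [t!0]) @ u @ q))"
        by (rule Suc.IH) (use Suc.prems in simp)
      moreover have "\<Psi> (t[j := x]) = (\<Sum>u\<leftarrow>sw cop k x. G ((p @ [t!0]) @ u @ q))" for x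
        using j1 lt by (simp add: \<Psi>_def)
      ultimately show ?thesis by simp
    qed
  qed
  have e: "(\<Sum>u\<leftarrow>sw cop (Suc k) y. G (p @ u @ q)) = (\<Sum>t\<leftarrow>sw cop 1 y. \<Psi> t)" for y
    unfolding sw_Suc_sum sw1_sum \<Psi>_def by (simp add: split_def)
  show ?case unfolding e by (rule linI2[OF VS]) (rule delta_lin[OF \<Psi>])
qed

lemma coassoc_k1:
  assumes G: "multilin sc (n+2) G"
  shows "(\<Sum>t\<leftarrow>sw cop n x. \<Sum>(c,d)\<leftarrow>cop (t!0). G (c # d # tl t)) = (\<Sum>t\<leftarrow>sw cop (Suc n) x. G t)"
proof (cases n)
  case 0 then show ?thesis unfolding sw_Suc_sum by (simp add: split_def)
next
  case (Suc n')
  define \<Phi> where "\<Phi> v = (\<Sum>t'\<leftarrow>sw cop n' (v!2). G (v!0 # v!1 # t'))" for v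
  have \<Phi>: "multilin sc 3 \<Phi>"
  proof (rule multilinI[OF VS])
    fix j :: nat and t :: "'h list" assume j: "j < 3" and lt: "length t = 3"
    consider "j = 0" | "j = 1" | "j = 2" using j by linarith
    then show "Vector_Spaces.linear sc (*) (\<lambda>x. \<Phi> (t[j := x]))"
    proof cases
      case 1
      have "Vector_Spaces.linear sc (*) (\<lambda>x. \<Sum>t'\<leftarrow>sw cop n' (t!2). G ([] @ x # (t!1 # t')))"
      proof (rule lin_sum_list_fun[OF VS])
        fix u assume "u \<in> set (sw cop n' (t!2))"
        then have "length u = Suc n'" by (rule sw_len)
        then have "length ([]::'h list) + length (t!1 # u) + 1 = n + 2" using Suc by simp
        then show "Vector_Spaces.linear sc (*) (\<lambda>x. G ([] @ x # (t!1 # u)))" by (rule ml_pos[OF VS G])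
      qed
      moreover have "\<Phi> (t[j := x]) = (\<Sum>t'\<leftarrow>sw cop n' (t!2). G ([] @ x # (t!1 # t')))" for x
        using 1 lt by (simp add: \<Phi>_def)
      ultimately show ?thesis by simp
    next
      case 2
      have "Vector_Spaces.linear sc (*) (\<lambda>x. \<Sum>t'\<leftarrow>sw cop n' (t!2). G ([t!0] @ x # t'))"
      proof (rule lin_sum_list_fun[OF VS])
        fix u assume "u \<in> set (sw cop n' (t!2))"
        then have "length u = Suc n'" by (rule sw_len)
        then have "length [t!0] + length u + 1 = n + 2" using Suc by simp
        then show "Vector_Spaces.linear sc (*) (\<lambda>x. G ([t!0] @ x # u))" by (rule ml_pos[OF VS G])
      qed
      moreover have "\<Phi> (t[j := x]) = (\<Sum>t'\<leftarrow>sw cop n' (t!2). G ([t!0] @ x # t'))" for x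
        using 2 lt by (simp add: \<Phi>_def)
      ultimately show ?thesis by simp
    next
      case 3
      have "Vector_Spaces.linear sc (*) (\<lambda>y. \<Sum>u\<leftarrow>sw cop n' y. G ([t!0, t!1] @ u @ []))"
        by (rule sw_sum_linear[OF G]) (use Suc in simp)
      moreover have "\<Phi> (t[j := x]) = (\<Sum>u\<leftarrow>sw cop n' x. G ([t!0, t!1] @ u @ []))" for x
        using 3 lt by (simp add: \<Phi>_def)
      ultimately show ?thesis by simp
    qed
  qed
  have "(\<Sum>t\<leftarrow>sw cop n x. \<Sum>(c,d)\<leftarrow>cop (t!0). G (c # d # tl t))
      = (\<Sum>(a,b)\<leftarrow>cop x. \<Sum>t'\<leftarrow>sw cop n' b. \<Sum>(c,d)\<leftarrow>cop a. G (c # d # t'))"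
    unfolding Suc sw_Suc_sum by simp
  also have "\<dots> = (\<Sum>(a,b)\<leftarrow>cop x. \<Sum>(c,d)\<leftarrow>cop a. \<Sum>t'\<leftarrow>sw cop n' b. G (c # d # t'))"
  proof (rule sl_cong)
    fix p :: "'h \<times> 'h"
    obtain a b where p: "p = (a, b)" by (cases p)
    show "(case p of (a, b) \<Rightarrow> \<Sum>t'\<leftarrow>sw cop n' b. \<Sum>(c,d)\<leftarrow>cop a. G (c # d # t'))
        = (case p of (a, b) \<Rightarrow> \<Sum>(c,d)\<leftarrow>cop a. \<Sum>t'\<leftarrow>sw cop n' b. G (c # d # t'))"
      unfolding p prod.case split_def by (rule sl_swap2)
  qed
  also have "\<dots> = (\<Sum>(a,b)\<leftarrow>cop x. \<Sum>(c,d)\<leftarrow>cop a. \<Phi> [c, d, b])"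
    by (simp add: \<Phi>_def)
  also have "\<dots> = (\<Sum>v\<leftarrow>sw cop 2 x. \<Phi> v)" by (rule coassoc2[OF \<Phi>])
  also have "\<dots> = (\<Sum>t\<leftarrow>sw cop (Suc n) x. G t)"
    unfolding Suc numeral_2_eq_2 sw_Suc_sum sw0_sum \<Phi>_def by simp
  finally show ?thesis .
qed

lemma G'_multilin:
  assumes G: "multilin sc (n + k + 2) G"
  shows "multilin sc (n + 2) (\<lambda>v. \<Sum>u'\<leftarrow>sw cop k (v!1). G (take 1 v @ u' @ drop 2 v))"
proof (rule multilinI[OF VS])
  fix j :: nat and t :: "'h list" assume j: "j < n + 2" and lt: "length t = n + 2"
  obtain a b r where t: "t = a # b # r" using lt by (cases t; cases "tl t"; auto)
  have lr: "length r = n" using lt t by simp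
  show "Vector_Spaces.linear sc (*) (\<lambda>x. (\<lambda>v. \<Sum>u'\<leftarrow>sw cop k (v!1). G (take 1 v @ u' @ drop 2 v)) (t[j := x]))"
  proof (cases j)
    case 0
    have "Vector_Spaces.linear sc (*) (\<lambda>x. \<Sum>u'\<leftarrow>sw cop k b. G ([] @ x # (u' @ r)))"
    proof (rule lin_sum_list_fun[OF VS])
      fix u assume "u \<in> set (sw cop k b)"
      then have "length u = Suc k" by (rule sw_len)
      then have "length ([]::'h list) + length (u @ r) + 1 = n + k + 2" using lr by simp
      then show "Vector_Spaces.linear sc (*) (\<lambda>x. G ([] @ x # (u @ r)))" by (rule ml_pos[OF VS G])
    qed
    then show ?thesis using 0 t by simp
  next
    case (Suc j')
    show ?thesis
    proof (cases j')
      case 0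
      have "Vector_Spaces.linear sc (*) (\<lambda>y. \<Sum>u\<leftarrow>sw cop k y. G ([a] @ u @ r))"
        by (rule sw_sum_linear[OF G]) (use lr in simp)
      then show ?thesis using 0 Suc t by simp
    next
      case (Suc j'')
      have jr: "j'' < length r" using j \<open>j = Suc j'\<close> Suc lr by simp
      have "Vector_Spaces.linear sc (*) (\<lambda>x. \<Sum>u'\<leftarrow>sw cop k b. G ((a # u' @ r)[Suc (length u' + j'') := x]))"
      proof (rule lin_sum_list_fun[OF VS])
        fix u assume "u \<in> set (sw cop k b)"
        then have "length u = Suc k" by (rule sw_len)
        then have "length (a # u @ r) = n + k + 2" "Suc (length u + j'') < n + k + 2" using lr jr by simp_all
        then show "Vector_Spaces.linear sc (*) (\<lambda>x. G ((a # u @ r)[Suc (length u + j'') := x]))"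
          by (rule multilinD[OF VS G])
      qed
      moreover have "(a # u' @ r)[Suc (length u' + j'') := x] = a # u' @ r[j'' := x]" for u' x
        by (simp add: list_update_append)
      ultimately show ?thesis using Suc \<open>j = Suc j'\<close> t by simp
    qed
  qed
qed

lemma coassoc:
  assumes "i \<le> n" "multilin sc (n + k + 1) G"
  shows "(\<Sum>t\<leftarrow>sw cop n x. \<Sum>u\<leftarrow>sw cop k (t!i). G (take i t @ u @ drop (Suc i) t)) = (\<Sum>v\<leftarrow>sw cop (n + k) x. G v)"
  using assms
proof (induction k arbitrary: n i x G)
  case 0
  have "(\<Sum>t\<leftarrow>sw cop n x. \<Sum>u\<leftarrow>sw cop 0 (t!i). G (take i t @ u @ drop (Suc i) t)) = (\<Sum>t\<leftarrow>sw cop n x. G t)"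
  proof (rule sl_cong)
    fix t assume "t \<in> set (sw cop n x)"
    then have "length t = Suc n" by (rule sw_len)
    then have "i < length t" using 0 by simp
    then show "(\<Sum>u\<leftarrow>sw cop 0 (t!i). G (take i t @ u @ drop (Suc i) t)) = G t"
      by (simp add: id_take_nth_drop[symmetric])
  qed
  then show ?case by simp
next
  case (Suc k)
  note outer = Suc.IH
  from Suc.prems show ?case
  proof (induction i arbitrary: n x G)
    case 0
    define G' where "G' v = (\<Sum>u'\<leftarrow>sw cop k (v!1). G (take 1 v @ u' @ drop 2 v))" for v
    have G': "multilin sc (n + 2) G'"
      unfolding G'_def by (rule G'_multilin) (use 0 in simp)
    have "(\<Sum>t\<leftarrow>sw cop n x. \<Sum>u\<leftarrow>sw cop (Suc k) (t!0). G (take 0 t @ u @ drop (Suc 0) t))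
        = (\<Sum>t\<leftarrow>sw cop n x. \<Sum>(c,d)\<leftarrow>cop (t!0). G' (c # d # tl t))"
      unfolding sw_Suc_sum G'_def by (simp add: drop_Suc)
    also have "\<dots> = (\<Sum>v\<leftarrow>sw cop (Suc n) x. G' v)"
      by (rule coassoc_k1[OF G'])
    also have "\<dots> = (\<Sum>v\<leftarrow>sw cop (Suc n + k) x. G v)"
    proof -
      have m: "multilin sc (Suc n + k + 1) G" using 0 by simp
      show ?thesis using outer[of 1 "Suc n" G x, OF _ m] by (simp add: G'_def numeral_2_eq_2 del: sw.simps)
    qed
    finally show ?case by simp
  next
    case (Suc i)
    then obtain n' where n: "n = Suc n'" by (cases n) auto
    have Ga: "multilin sc (n' + Suc k + 1) (\<lambda>v. G (a # v))" for a
      by (rule ml_shift[OF VS]) (use Suc.prems n in simp)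
    have "(\<Sum>t\<leftarrow>sw cop n x. \<Sum>u\<leftarrow>sw cop (Suc k) (t!Suc i). G (take (Suc i) t @ u @ drop (Suc (Suc i)) t))
        = (\<Sum>(a,b)\<leftarrow>cop x. \<Sum>t'\<leftarrow>sw cop n' b. \<Sum>u\<leftarrow>sw cop (Suc k) (t'!i). G (a # (take i t' @ u @ drop (Suc i) t')))"
      unfolding n sw_Suc_sum by simp
    also have "\<dots> = (\<Sum>(a,b)\<leftarrow>cop x. \<Sum>v\<leftarrow>sw cop (n' + Suc k) b. G (a # v))"
    proof (rule sl_cong)
      fix p :: "'h \<times> 'h"
      obtain a b where p: "p = (a, b)" by (cases p)
      have "i \<le> n'" using Suc.prems n by simp
      then show "(case p of (a, b) \<Rightarrow> \<Sum>t'\<leftarrow>sw cop n' b. \<Sum>u\<leftarrow>sw cop (Suc k) (t'!i). G (a # (take i t' @ u @ drop (Suc i) t')))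
          = (case p of (a, b) \<Rightarrow> \<Sum>v\<leftarrow>sw cop (n' + Suc k) b. G (a # v))"
        unfolding p prod.case by (rule Suc.IH[OF _ Ga])
    qed
    also have "\<dots> = (\<Sum>v\<leftarrow>sw cop (n + Suc k) x. G v)"
      unfolding n add_Suc sw_Suc_sum ..
    finally show ?case .
  qed
qed

end


lemma len2E: "length t = 2 \<Longrightarrow> (\<And>a b. t = [a, b] \<Longrightarrow> P) \<Longrightarrow> P"
  by (cases t; cases "tl t"; auto)
lemma len3E: "length t = 3 \<Longrightarrow> (\<And>a b c. t = [a, b, c] \<Longrightarrow> P) \<Longrightarrow> P"
  by (cases t; cases "tl t"; cases "tl (tl t)"; auto)

lemma sep:
  fixes sc :: "'k::field \<Rightarrow> 'h::ab_group_add \<Rightarrow> 'h"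
  assumes VSH: "vector_space sc" and h: "\<And>f. Vector_Spaces.linear sc (*) f \<Longrightarrow> f a = f b"
  shows "a = b"
proof (rule ccontr)
  assume ne: "a \<noteq> b"
  interpret V: vector_space sc by (rule VSH)
  interpret P: vector_space_pair sc "(*)" using VSH vs_field by (simp add: vector_space_pair_def)
  define d where "d = a - b"
  have d0: "d \<noteq> 0" using ne by (simp add: d_def)
  have iD: "V.independent {d}" using d0 by simp
  define f where "f = P.construct {d} (\<lambda>_. 1::'k)"
  have lf: "Vector_Spaces.linear sc (*) f" unfolding f_def by (rule P.linear_construct[OF iD])
  have fd: "f d = 1" unfolding f_def by (rule P.construct_basis[OF iD]) simp
  have "f a = f b + f d" using linD(1)[OF VSH lf, of b d] by (simp add: d_def)
  then have "f d = 0" using h[OF lf] by simp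
  then show False using fd by simp
qed

context
  fixes sc :: "'k::field \<Rightarrow> 'h::ab_group_add \<Rightarrow> 'h"
    and m :: "'h \<Rightarrow> 'h \<Rightarrow> 'h" and one :: 'h
    and cop :: "'h \<Rightarrow> ('h \<times> 'h) list" and eps :: "'h \<Rightarrow> 'k"
    and w wi :: "'h \<Rightarrow> 'h \<Rightarrow> 'h \<Rightarrow> 'k"
    and s :: "'h \<Rightarrow> 'h" and \<alpha> \<beta> :: "'h \<Rightarrow> 'k"
  assumes H: "dual_quasi_hopf sc m one cop eps w wi s \<alpha> \<beta>"
begin

lemma CH: "coalgebra sc cop eps" using H by (simp add: dual_quasi_hopf_def dual_quasi_bialgebra_def)
lemma VSH: "vector_space sc" using CH by (simp add: coalgebra_def)

lemma la: "Vector_Spaces.linear sc (*) \<alpha>" using H by (simp add: dual_quasi_hopf_def)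
lemma lb: "Vector_Spaces.linear sc (*) \<beta>" using H by (simp add: dual_quasi_hopf_def)

lemma s_rules: "s (x + y) = s x + s y" "s (sc c x) = sc c (s x)"
  using H by (auto simp: dual_quasi_hopf_def linear_iff)

lemma m_rules: "m (x + y) z = m x z + m y z" "m (sc c x) z = sc c (m x z)"
   "m z (x + y) = m z x + m z y" "m z (sc c x) = sc c (m z x)"
  using H by (auto simp: dual_quasi_hopf_def dual_quasi_bialgebra_def bilinear_map_def linear_iff)

lemma w_rules: "w (x + y) a b = w x a b + w y a b" "w (sc c x) a b = c * w x a b"
   "w a (x + y) b = w a x b + w a y b" "w a (sc c x) b = c * w a x b"
   "w a b (x + y) = w a b x + w a b y" "w a b (sc c x) = c * w a b x"
  using H by (auto simp: dual_quasi_hopf_def dual_quasi_bialgebra_def trilinear_form_def linear_iff)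

lemmas ab_rules = linD[OF VSH la] linD[OF VSH lb]

lemma w_lin2: "Vector_Spaces.linear sc (*) (\<lambda>y. w a y b)"
  by (rule linI[OF VSH]) (simp_all add: w_rules)

lemma lin_comp_m2: "Vector_Spaces.linear sc (*) g \<Longrightarrow> Vector_Spaces.linear sc (*) (\<lambda>y. g (m a y))"
  by (rule linI[OF VSH]) (simp_all add: m_rules linD[OF VSH])
lemma lin_comp_m1: "Vector_Spaces.linear sc (*) g \<Longrightarrow> Vector_Spaces.linear sc (*) (\<lambda>y. g (m y a))"
  by (rule linI[OF VSH]) (simp_all add: m_rules linD[OF VSH])
lemma lin_comp_s: "Vector_Spaces.linear sc (*) g \<Longrightarrow> Vector_Spaces.linear sc (*) (\<lambda>y. g (s y))"
  by (rule linI[OF VSH]) (simp_all add: s_rules linD[OF VSH])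

definition S where "S h = (\<Sum>t\<leftarrow>sw cop 2 h. sc (\<beta> (t!0) * \<alpha> (t!2)) (s (t!1)))"

lemma fS:
  assumes lf: "Vector_Spaces.linear sc (*) f"
  shows "f (S h) = (\<Sum>t\<leftarrow>sw cop 2 h. \<beta> (t!0) * \<alpha> (t!2) * f (s (t!1)))"
  unfolding S_def by (simp add: lin_sum_list[OF VSH lf] linD[OF VSH lf])

lemma GS_ml:
  assumes lf: "Vector_Spaces.linear sc (*) f"
  shows "multilin sc 3 (\<lambda>t. \<beta> (t!0) * \<alpha> (t!2) * f (s (t!1)))"
proof (rule multilinI[OF VSH])
  fix j :: nat and t :: "'h list" assume j: "j < 3" and lt: "length t = 3"
  consider "j = 0" | "j = 1" | "j = 2" using j by linarith
  then show "Vector_Spaces.linear sc (*) (\<lambda>x. \<beta> (t[j := x] ! 0) * \<alpha> (t[j := x] ! 2) * f (s (t[j := x] ! 1)))"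
    by cases (rule linI[OF VSH]; simp add: lt ab_rules s_rules linD[OF VSH lf] algebra_simps)+
qed

lemma S_lin: "Vector_Spaces.linear sc sc S"
proof -
  have lfS: "Vector_Spaces.linear sc (*) (\<lambda>y. f (S y))" if lf: "Vector_Spaces.linear sc (*) f" for f
  proof -
    have "Vector_Spaces.linear sc (*) (\<lambda>y. \<Sum>u\<leftarrow>sw cop 2 y. (\<lambda>t. \<beta> (t!0) * \<alpha> (t!2) * f (s (t!1))) ([] @ u @ []))"
      by (rule sw_sum_linear[OF CH GS_ml[OF lf]]) simp
    then show ?thesis by (simp add: fS[OF lf])
  qed
  have add: "S (x + y) = S x + S y" for x y
    by (rule sep[OF VSH]) (simp add: linD[OF VSH lfS] linD[OF VSH])
  have scl: "S (sc c x) = sc c (S x)" for c x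
    by (rule sep[OF VSH]) (simp add: linD[OF VSH lfS] linD[OF VSH])
  show ?thesis unfolding linear_iff using VSH add scl by blast
qed

lemma dS:
  assumes P: "multilin sc 2 P"
  shows "(\<Sum>u\<leftarrow>sw cop 1 (S y). P u) = (\<Sum>t\<leftarrow>sw cop 2 y. \<beta> (t!0) * \<alpha> (t!2) * (\<Sum>r\<leftarrow>sw cop 1 (t!1). P [s (r!1), s (r!0)]))"
proof -
  have "Vector_Spaces.linear sc (*) (\<lambda>y. \<Sum>u\<leftarrow>sw cop 1 y. P ([] @ u @ []))"
    by (rule sw_sum_linear[OF CH P]) simp
  then have lP: "Vector_Spaces.linear sc (*) (\<lambda>y. \<Sum>u\<leftarrow>sw cop 1 y. P u)" by simp
  have anti: "(\<Sum>u\<leftarrow>sw cop 1 (s z). P u) = (\<Sum>r\<leftarrow>sw cop 1 z. P [s (r!1), s (r!0)])" for z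
  proof -
    have te: "tens_eq sc 2 (sw cop 1 (s z)) (map (\<lambda>t. [s (t!1), s (t!0)]) (sw cop 1 z))"
      using H by (simp add: dual_quasi_hopf_def)
    have "(\<Sum>u\<leftarrow>sw cop 1 (s z). P u) = (\<Sum>u\<leftarrow>map (\<lambda>t. [s (t!1), s (t!0)]) (sw cop 1 z). P u)"
      by (rule tens_eq_multilin[OF VSH te _ _ P]) (auto dest: sw_len)
    then show ?thesis by (simp add: o_def)
  qed
  have "(\<Sum>u\<leftarrow>sw cop 1 (S y). P u) = (\<Sum>t\<leftarrow>sw cop 2 y. \<Sum>u\<leftarrow>sw cop 1 (sc (\<beta> (t!0) * \<alpha> (t!2)) (s (t!1))). P u)"
    unfolding S_def by (rule lin_sum_list[OF VSH lP])
  also have "\<dots> = (\<Sum>t\<leftarrow>sw cop 2 y. \<beta> (t!0) * \<alpha> (t!2) * (\<Sum>u\<leftarrow>sw cop 1 (s (t!1)). P u))"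
    by (rule sl_cong) (rule linD(2)[OF VSH lP])
  also have "\<dots> = (\<Sum>t\<leftarrow>sw cop 2 y. \<beta> (t!0) * \<alpha> (t!2) * (\<Sum>r\<leftarrow>sw cop 1 (t!1). P [s (r!1), s (r!0)]))"
    by (simp only: anti)
  finally show ?thesis .
qed

lemma P2: "(\<Sum>t\<leftarrow>sw cop 2 x. w (t!0) (S (t!1)) (t!2)) = eps x"
proof -
  define G where "G z = w (z!0) (sc (\<beta> (z!1) * \<alpha> (z!3)) (s (z!2))) (z!4)" for z
  have G: "multilin sc 5 G"
  proof (rule multilinI[OF VSH])
    fix j :: nat and t :: "'h list" assume j: "j < 5" and lt: "length t = 5"
    consider "j = 0" | "j = 1" | "j = 2" | "j = 3" | "j = 4" using j by linarith
    then show "Vector_Spaces.linear sc (*) (\<lambda>x. G (t[j := x]))"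
      by cases (rule linI[OF VSH]; simp add: G_def lt ab_rules s_rules w_rules algebra_simps)+
  qed
  have "(\<Sum>t\<leftarrow>sw cop 2 x. w (t!0) (S (t!1)) (t!2)) = (\<Sum>t\<leftarrow>sw cop 2 x. \<Sum>v\<leftarrow>sw cop 2 (t!1). G (take 1 t @ v @ drop (Suc 1) t))"
  proof (rule sl_cong)
    fix t assume "t \<in> set (sw cop 2 x)"
    then have "length t = 3" using sw_len by fastforce
    then have t3: "t = [t!0, t!1, t!2]" by (rule len3)
    have "w (t!0) (S (t!1)) (t!2) = (\<Sum>v\<leftarrow>sw cop 2 (t!1). w (t!0) (sc (\<beta> (v!0) * \<alpha> (v!2)) (s (v!1))) (t!2))"
      unfolding S_def by (rule lin_sum_list[OF VSH w_lin2])
    also have "\<dots> = (\<Sum>v\<leftarrow>sw cop 2 (t!1). G (take 1 t @ v @ drop (Suc 1) t))"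
    proof (rule sl_cong)
      fix v assume "v \<in> set (sw cop 2 (t!1))"
      then have "length v = 3" using sw_len by fastforce
      then have v3: "v = [v!0, v!1, v!2]" by (rule len3)
      show "w (t!0) (sc (\<beta> (v!0) * \<alpha> (v!2)) (s (v!1))) (t!2) = G (take 1 t @ v @ drop (Suc 1) t)"
        by (subst (3) t3, subst (3) t3, subst v3) (simp add: G_def)
    qed
    finally show "w (t!0) (S (t!1)) (t!2) = (\<Sum>v\<leftarrow>sw cop 2 (t!1). G (take 1 t @ v @ drop (Suc 1) t))" .
  qed
  also have "\<dots> = (\<Sum>v\<leftarrow>sw cop (2 + 2) x. G v)"
    by (rule coassoc[OF CH]) (use G in simp_all)
  also have "\<dots> = eps x"
    using H by (simp add: dual_quasi_hopf_def G_def)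
  finally show ?thesis .
qed

lemma P1:
  assumes lf: "Vector_Spaces.linear sc (*) f" and lg: "Vector_Spaces.linear sc (*) g"
  shows "(\<Sum>t\<leftarrow>sw cop 1 x. \<Sum>u\<leftarrow>sw cop 1 (S (t!1)). f (u!0) * g (m (t!0) (u!1))) = f (S x) * g one"
proof -
  define G5 where "G5 y = \<beta> (y!1) * \<alpha> (y!4) * f (s (y!3)) * g (m (y!0) (s (y!2)))" for y
  define G4 where "G4 a z = \<beta> (z!0) * \<alpha> (z!3) * f (s (z!2)) * g (m a (s (z!1)))" for a z
  have G5: "multilin sc 5 G5"
  proof (rule multilinI[OF VSH])
    fix j :: nat and t :: "'h list" assume j: "j < 5" and lt: "length t = 5"
    consider "j = 0" | "j = 1" | "j = 2" | "j = 3" | "j = 4" using j by linarith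
    then show "Vector_Spaces.linear sc (*) (\<lambda>x. G5 (t[j := x]))"
      by cases (rule linI[OF VSH]; simp add: G5_def lt ab_rules s_rules m_rules linD[OF VSH lf] linD[OF VSH lg] algebra_simps)+
  qed
  have G4: "multilin sc 4 (G4 a)" for a
  proof (rule multilinI[OF VSH])
    fix j :: nat and t :: "'h list" assume j: "j < 4" and lt: "length t = 4"
    consider "j = 0" | "j = 1" | "j = 2" | "j = 3" using j by linarith
    then show "Vector_Spaces.linear sc (*) (\<lambda>x. G4 a (t[j := x]))"
      by cases (rule linI[OF VSH]; simp add: G4_def lt ab_rules s_rules m_rules linD[OF VSH lf] linD[OF VSH lg] algebra_simps)+
  qed
  have Pm: "multilin sc 2 (\<lambda>u. f (u!0) * g (m a (u!1)))" for a
  proof (rule multilinI[OF VSH])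
    fix j :: nat and t :: "'h list" assume j: "j < 2" and lt: "length t = 2"
    consider "j = 0" | "j = 1" using j by linarith
    then show "Vector_Spaces.linear sc (*) (\<lambda>x. (\<lambda>u. f (u!0) * g (m a (u!1))) (t[j := x]))"
      by cases (rule linI[OF VSH]; simp add: lt ab_rules s_rules m_rules linD[OF VSH lf] linD[OF VSH lg] algebra_simps)+
  qed
  have E1: "(\<Sum>u\<leftarrow>sw cop 1 (S y). f (u!0) * g (m a (u!1))) = (\<Sum>z\<leftarrow>sw cop 3 y. G4 a z)" for a y
  proof -
    have "(\<Sum>u\<leftarrow>sw cop 1 (S y). f (u!0) * g (m a (u!1)))
        = (\<Sum>v\<leftarrow>sw cop 2 y. \<beta> (v!0) * \<alpha> (v!2) * (\<Sum>r\<leftarrow>sw cop 1 (v!1). f (s (r!1)) * g (m a (s (r!0)))))"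
      using dS[OF Pm[of a], of y] by (simp del: sw.simps)
    also have "\<dots> = (\<Sum>v\<leftarrow>sw cop 2 y. \<Sum>r\<leftarrow>sw cop 1 (v!1). G4 a (take 1 v @ r @ drop (Suc 1) v))"
    proof (rule sl_cong)
      fix v assume "v \<in> set (sw cop 2 y)"
      then have "length v = 3" using sw_len by fastforce
      then obtain v0 v1 v2 where v: "v = [v0, v1, v2]" by (rule len3E)
      have "(\<Sum>r\<leftarrow>sw cop 1 v1. G4 a ([v0] @ r @ [v2])) = (\<Sum>r\<leftarrow>sw cop 1 v1. \<beta> v0 * \<alpha> v2 * (f (s (r!1)) * g (m a (s (r!0)))))"
      proof (rule sl_cong)
        fix r assume "r \<in> set (sw cop 1 v1)"
        then have "length r = 2" using sw_len by fastforce
        then obtain r0 r1 where r: "r = [r0, r1]" by (rule len2E)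
        show "G4 a ([v0] @ r @ [v2]) = \<beta> v0 * \<alpha> v2 * (f (s (r!1)) * g (m a (s (r!0))))"
          by (simp add: r G4_def algebra_simps)
      qed
      then show "\<beta> (v!0) * \<alpha> (v!2) * (\<Sum>r\<leftarrow>sw cop 1 (v!1). f (s (r!1)) * g (m a (s (r!0))))
          = (\<Sum>r\<leftarrow>sw cop 1 (v!1). G4 a (take 1 v @ r @ drop (Suc 1) v))"
        by (simp add: v sum_list_const_mult del: sw.simps)
    qed
    also have "\<dots> = (\<Sum>z\<leftarrow>sw cop (2 + 1) y. G4 a z)"
      by (rule coassoc[OF CH]) (use G4 in simp_all)
    finally show ?thesis by simp
  qed
  have "(\<Sum>t\<leftarrow>sw cop 1 x. \<Sum>u\<leftarrow>sw cop 1 (S (t!1)). f (u!0) * g (m (t!0) (u!1)))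
      = (\<Sum>t\<leftarrow>sw cop 1 x. \<Sum>z\<leftarrow>sw cop 3 (t!1). G5 (take 1 t @ z @ drop (Suc 1) t))"
  proof (rule sl_cong)
    fix t assume "t \<in> set (sw cop 1 x)"
    then have "length t = 2" using sw_len by fastforce
    then obtain t0 t1 where t: "t = [t0, t1]" by (rule len2E)
    have "(\<Sum>z\<leftarrow>sw cop 3 t1. G4 t0 z) = (\<Sum>z\<leftarrow>sw cop 3 t1. G5 ([t0] @ z @ []))"
    proof (rule sl_cong)
      fix z assume "z \<in> set (sw cop 3 t1)"
      then have "length z = 4" using sw_len by fastforce
      then show "G4 t0 z = G5 ([t0] @ z @ [])" by (simp add: G4_def G5_def nth_append)
    qed
    then show "(\<Sum>u\<leftarrow>sw cop 1 (S (t!1)). f (u!0) * g (m (t!0) (u!1))) = (\<Sum>z\<leftarrow>sw cop 3 (t!1). G5 (take 1 t @ z @ drop (Suc 1) t))"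
      using E1[of t0 t1] by (simp add: t del: sw.simps)
  qed
  also have "\<dots> = (\<Sum>z\<leftarrow>sw cop (1 + 3) x. G5 z)"
    by (rule coassoc[OF CH]) (use G5 in simp_all)
  also have "\<dots> = (\<Sum>z\<leftarrow>sw cop (2 + 2) x. G5 z)" by simp
  also have "\<dots> = (\<Sum>y\<leftarrow>sw cop 2 x. \<Sum>z\<leftarrow>sw cop 2 (y!0). G5 (take 0 y @ z @ drop (Suc 0) y))"
    by (rule coassoc[OF CH, symmetric]) (use G5 in simp_all)
  also have "\<dots> = (\<Sum>y\<leftarrow>sw cop 2 x. \<beta> (y!0) * \<alpha> (y!2) * f (s (y!1)) * g one)"
  proof (rule sl_cong)
    fix y assume "y \<in> set (sw cop 2 x)"
    then have "length y = 3" using sw_len by fastforce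
    then obtain y0 y1 y2 where y: "y = [y0, y1, y2]" by (rule len3E)
    have "(\<Sum>z\<leftarrow>sw cop 2 y0. G5 (z @ [y1, y2])) = (\<Sum>z\<leftarrow>sw cop 2 y0. \<alpha> y2 * f (s y1) * (\<beta> (z!1) * g (m (z!0) (s (z!2)))))"
    proof (rule sl_cong)
      fix z assume "z \<in> set (sw cop 2 y0)"
      then have "length z = 3" using sw_len by fastforce
      then obtain z0 z1 z2 where z: "z = [z0, z1, z2]" by (rule len3E)
      show "G5 (z @ [y1, y2]) = \<alpha> y2 * f (s y1) * (\<beta> (z!1) * g (m (z!0) (s (z!2))))"
        by (simp add: z G5_def algebra_simps)
    qed
    also have "\<dots> = \<alpha> y2 * f (s y1) * g (\<Sum>z\<leftarrow>sw cop 2 y0. sc (\<beta> (z!1)) (m (z!0) (s (z!2))))"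
      by (simp add: sum_list_const_mult lin_sum_list[OF VSH lg] linD[OF VSH lg] del: sw.simps)
    also have "\<dots> = \<alpha> y2 * f (s y1) * g (sc (\<beta> y0) one)"
      using H by (simp add: dual_quasi_hopf_def del: sw.simps)
    also have "\<dots> = \<beta> y0 * \<alpha> y2 * f (s y1) * g one"
      by (simp add: linD[OF VSH lg] algebra_simps)
    finally show "(\<Sum>z\<leftarrow>sw cop 2 (y!0). G5 (take 0 y @ z @ drop (Suc 0) y)) = \<beta> (y!0) * \<alpha> (y!2) * f (s (y!1)) * g one"
      by (simp add: y del: sw.simps)
  qed
  also have "\<dots> = f (S x) * g one"
    by (simp add: fS[OF lf] sum_list_mult_const del: sw.simps)
  finally show ?thesis .
qed

lemma P3:
  assumes lf: "Vector_Spaces.linear sc (*) f" and lg: "Vector_Spaces.linear sc (*) g"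
  shows "(\<Sum>t\<leftarrow>sw cop 1 x. \<Sum>u\<leftarrow>sw cop 1 (S (t!0)). f (m (u!0) (t!1)) * g (u!1)) = f one * g (S x)"
proof -
  define G3 where "G3 y = \<beta> (y!0) * \<alpha> (y!3) * f (m (s (y!2)) (y!4)) * g (s (y!1))" for y
  define G4 where "G4 a z = \<beta> (z!0) * \<alpha> (z!3) * f (m (s (z!2)) a) * g (s (z!1))" for a z
  have G3: "multilin sc 5 G3"
  proof (rule multilinI[OF VSH])
    fix j :: nat and t :: "'h list" assume j: "j < 5" and lt: "length t = 5"
    consider "j = 0" | "j = 1" | "j = 2" | "j = 3" | "j = 4" using j by linarith
    then show "Vector_Spaces.linear sc (*) (\<lambda>x. G3 (t[j := x]))"
      by cases (rule linI[OF VSH]; simp add: G3_def lt ab_rules s_rules m_rules linD[OF VSH lf] linD[OF VSH lg] algebra_simps)+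
  qed
  have G4: "multilin sc 4 (G4 a)" for a
  proof (rule multilinI[OF VSH])
    fix j :: nat and t :: "'h list" assume j: "j < 4" and lt: "length t = 4"
    consider "j = 0" | "j = 1" | "j = 2" | "j = 3" using j by linarith
    then show "Vector_Spaces.linear sc (*) (\<lambda>x. G4 a (t[j := x]))"
      by cases (rule linI[OF VSH]; simp add: G4_def lt ab_rules s_rules m_rules linD[OF VSH lf] linD[OF VSH lg] algebra_simps)+
  qed
  have Pm: "multilin sc 2 (\<lambda>u. f (m (u!0) a) * g (u!1))" for a
  proof (rule multilinI[OF VSH])
    fix j :: nat and t :: "'h list" assume j: "j < 2" and lt: "length t = 2"
    consider "j = 0" | "j = 1" using j by linarith
    then show "Vector_Spaces.linear sc (*) (\<lambda>x. (\<lambda>u. f (m (u!0) a) * g (u!1)) (t[j := x]))"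
      by cases (rule linI[OF VSH]; simp add: lt ab_rules s_rules m_rules linD[OF VSH lf] linD[OF VSH lg] algebra_simps)+
  qed
  have E1: "(\<Sum>u\<leftarrow>sw cop 1 (S y). f (m (u!0) a) * g (u!1)) = (\<Sum>z\<leftarrow>sw cop 3 y. G4 a z)" for a y
  proof -
    have "(\<Sum>u\<leftarrow>sw cop 1 (S y). f (m (u!0) a) * g (u!1))
        = (\<Sum>v\<leftarrow>sw cop 2 y. \<beta> (v!0) * \<alpha> (v!2) * (\<Sum>r\<leftarrow>sw cop 1 (v!1). f (m (s (r!1)) a) * g (s (r!0))))"
      using dS[OF Pm[of a], of y] by (simp del: sw.simps)
    also have "\<dots> = (\<Sum>v\<leftarrow>sw cop 2 y. \<Sum>r\<leftarrow>sw cop 1 (v!1). G4 a (take 1 v @ r @ drop (Suc 1) v))"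
    proof (rule sl_cong)
      fix v assume "v \<in> set (sw cop 2 y)"
      then have "length v = 3" using sw_len by fastforce
      then obtain v0 v1 v2 where v: "v = [v0, v1, v2]" by (rule len3E)
      have "(\<Sum>r\<leftarrow>sw cop 1 v1. G4 a ([v0] @ r @ [v2])) = (\<Sum>r\<leftarrow>sw cop 1 v1. \<beta> v0 * \<alpha> v2 * (f (m (s (r!1)) a) * g (s (r!0))))"
      proof (rule sl_cong)
        fix r assume "r \<in> set (sw cop 1 v1)"
        then have "length r = 2" using sw_len by fastforce
        then obtain r0 r1 where r: "r = [r0, r1]" by (rule len2E)
        show "G4 a ([v0] @ r @ [v2]) = \<beta> v0 * \<alpha> v2 * (f (m (s (r!1)) a) * g (s (r!0)))"
          by (simp add: r G4_def algebra_simps)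
      qed
      then show "\<beta> (v!0) * \<alpha> (v!2) * (\<Sum>r\<leftarrow>sw cop 1 (v!1). f (m (s (r!1)) a) * g (s (r!0)))
          = (\<Sum>r\<leftarrow>sw cop 1 (v!1). G4 a (take 1 v @ r @ drop (Suc 1) v))"
        by (simp add: v sum_list_const_mult del: sw.simps)
    qed
    also have "\<dots> = (\<Sum>z\<leftarrow>sw cop (2 + 1) y. G4 a z)"
      by (rule coassoc[OF CH]) (use G4 in simp_all)
    finally show ?thesis by simp
  qed
  have "(\<Sum>t\<leftarrow>sw cop 1 x. \<Sum>u\<leftarrow>sw cop 1 (S (t!0)). f (m (u!0) (t!1)) * g (u!1))
      = (\<Sum>t\<leftarrow>sw cop 1 x. \<Sum>z\<leftarrow>sw cop 3 (t!0). G3 (take 0 t @ z @ drop (Suc 0) t))"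
  proof (rule sl_cong)
    fix t assume "t \<in> set (sw cop 1 x)"
    then have "length t = 2" using sw_len by fastforce
    then obtain t0 t1 where t: "t = [t0, t1]" by (rule len2E)
    have "(\<Sum>z\<leftarrow>sw cop 3 t0. G4 t1 z) = (\<Sum>z\<leftarrow>sw cop 3 t0. G3 ([] @ z @ [t1]))"
    proof (rule sl_cong)
      fix z assume "z \<in> set (sw cop 3 t0)"
      then have "length z = 4" using sw_len by fastforce
      then show "G4 t1 z = G3 ([] @ z @ [t1])" by (simp add: G4_def G3_def nth_append)
    qed
    then show "(\<Sum>u\<leftarrow>sw cop 1 (S (t!0)). f (m (u!0) (t!1)) * g (u!1)) = (\<Sum>z\<leftarrow>sw cop 3 (t!0). G3 (take 0 t @ z @ drop (Suc 0) t))"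
      using E1[of t1 t0] by (simp add: t del: sw.simps)
  qed
  also have "\<dots> = (\<Sum>z\<leftarrow>sw cop (1 + 3) x. G3 z)"
    by (rule coassoc[OF CH]) (use G3 in simp_all)
  also have "\<dots> = (\<Sum>z\<leftarrow>sw cop (2 + 2) x. G3 z)" by simp
  also have "\<dots> = (\<Sum>y\<leftarrow>sw cop 2 x. \<Sum>z\<leftarrow>sw cop 2 (y!2). G3 (take 2 y @ z @ drop (Suc 2) y))"
    by (rule coassoc[OF CH, symmetric]) (use G3 in simp_all)
  also have "\<dots> = (\<Sum>y\<leftarrow>sw cop 2 x. f one * (\<beta> (y!0) * \<alpha> (y!2) * g (s (y!1))))"
  proof (rule sl_cong)
    fix y assume "y \<in> set (sw cop 2 x)"
    then have "length y = 3" using sw_len by fastforce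
    then obtain y0 y1 y2 where y: "y = [y0, y1, y2]" by (rule len3E)
    have "(\<Sum>z\<leftarrow>sw cop 2 y2. G3 ([y0, y1] @ z)) = (\<Sum>z\<leftarrow>sw cop 2 y2. \<beta> y0 * g (s y1) * (\<alpha> (z!1) * f (m (s (z!0)) (z!2))))"
    proof (rule sl_cong)
      fix z assume "z \<in> set (sw cop 2 y2)"
      then have "length z = 3" using sw_len by fastforce
      then obtain z0 z1 z2 where z: "z = [z0, z1, z2]" by (rule len3E)
      show "G3 ([y0, y1] @ z) = \<beta> y0 * g (s y1) * (\<alpha> (z!1) * f (m (s (z!0)) (z!2)))"
        by (simp add: z G3_def algebra_simps)
    qed
    also have "\<dots> = \<beta> y0 * g (s y1) * f (\<Sum>z\<leftarrow>sw cop 2 y2. sc (\<alpha> (z!1)) (m (s (z!0)) (z!2)))"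
      by (simp add: sum_list_const_mult lin_sum_list[OF VSH lf] linD[OF VSH lf] del: sw.simps)
    also have "\<dots> = \<beta> y0 * g (s y1) * f (sc (\<alpha> y2) one)"
      using H by (simp add: dual_quasi_hopf_def del: sw.simps)
    also have "\<dots> = f one * (\<beta> y0 * \<alpha> y2 * g (s y1))"
      by (simp add: linD[OF VSH lf] algebra_simps)
    finally show "(\<Sum>z\<leftarrow>sw cop 2 (y!2). G3 (take 2 y @ z @ drop (Suc 2) y)) = f one * (\<beta> (y!0) * \<alpha> (y!2) * g (s (y!1)))"
      by (simp add: y del: sw.simps)
  qed
  also have "\<dots> = f one * g (S x)"
    by (simp add: fS[OF lg] sum_list_const_mult del: sw.simps)
  finally show ?thesis .
qed

lemma main: "preantipode sc m one cop eps w (\<lambda>h. \<Sum>t\<leftarrow>sw cop 2 h. sc (\<beta> (t!0) * \<alpha> (t!2)) (s (t!1)))"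
proof -
  have Se: "(\<lambda>h. \<Sum>t\<leftarrow>sw cop 2 h. sc (\<beta> (t!0) * \<alpha> (t!2)) (s (t!1))) = S"
    by (rule ext) (simp add: S_def)
  have c1: "tens_eq sc 2
            (concat (map (\<lambda>t. map (\<lambda>u. [u!0, m (t!0) (u!1)]) (sw cop 1 (S (t!1)))) (sw cop 1 x)))
            [[S x, one]]" for x
    unfolding tens_eq_def
  proof (intro allI impI)
    fix fs :: "('h \<Rightarrow> 'k) list" assume l: "length fs = 2" and lin: "\<forall>f\<in>set fs. Vector_Spaces.linear sc (*) f"
    obtain f g where fs: "fs = [f, g]" using l by (rule len2E)
    have lf: "Vector_Spaces.linear sc (*) f" and lg: "Vector_Spaces.linear sc (*) g" using lin fs by auto
    show "(\<Sum>t\<leftarrow>concat (map (\<lambda>t. map (\<lambda>u. [u!0, m (t!0) (u!1)]) (sw cop 1 (S (t!1)))) (sw cop 1 x)).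
            prod_list (map2 (\<lambda>f x. f x) fs t)) =
          (\<Sum>t\<leftarrow>[[S x, one]]. prod_list (map2 (\<lambda>f x. f x) fs t))"
      using P1[OF lf lg, of x] by (simp add: fs sl_concat o_def del: sw.simps)
  qed
  have c3: "tens_eq sc 2
            (concat (map (\<lambda>t. map (\<lambda>u. [m (u!0) (t!1), u!1]) (sw cop 1 (S (t!0)))) (sw cop 1 x)))
            [[one, S x]]" for x
    unfolding tens_eq_def
  proof (intro allI impI)
    fix fs :: "('h \<Rightarrow> 'k) list" assume l: "length fs = 2" and lin: "\<forall>f\<in>set fs. Vector_Spaces.linear sc (*) f"
    obtain f g where fs: "fs = [f, g]" using l by (rule len2E)
    have lf: "Vector_Spaces.linear sc (*) f" and lg: "Vector_Spaces.linear sc (*) g" using lin fs by auto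
    show "(\<Sum>t\<leftarrow>concat (map (\<lambda>t. map (\<lambda>u. [m (u!0) (t!1), u!1]) (sw cop 1 (S (t!0)))) (sw cop 1 x)).
            prod_list (map2 (\<lambda>f x. f x) fs t)) =
          (\<Sum>t\<leftarrow>[[one, S x]]. prod_list (map2 (\<lambda>f x. f x) fs t))"
      using P3[OF lf lg, of x] by (simp add: fs sl_concat o_def del: sw.simps)
  qed
  show ?thesis unfolding Se preantipode_def using S_lin c1 P2 c3 by blast
qed

end

theorem theorem3p10:
  fixes sc :: "'k::field \<Rightarrow> 'h::ab_group_add \<Rightarrow> 'h"
    and m :: "'h \<Rightarrow> 'h \<Rightarrow> 'h" and one :: 'h
    and cop :: "'h \<Rightarrow> ('h \<times> 'h) list" and eps :: "'h \<Rightarrow> 'k"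
    and w wi :: "'h \<Rightarrow> 'h \<Rightarrow> 'h \<Rightarrow> 'k"
    and s :: "'h \<Rightarrow> 'h" and \<alpha> \<beta> :: "'h \<Rightarrow> 'k"
  assumes "dual_quasi_hopf sc m one cop eps w wi s \<alpha> \<beta>"
  shows "preantipode sc m one cop eps w
           (\<lambda>h. \<Sum>t\<leftarrow>sw cop 2 h. sc (\<beta> (t!0) * \<alpha> (t!2)) (s (t!1)))"
  by (rule main[OF assms])

end
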